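(* Let $R$ be a $*$-ring. The following are equivalent: (1) ${\rm psr}(R)=1$. (2) For any $a,b\in R$ with $aR+bR=R$ there exists a projection $p$ such that $a+bp$ is right invertible. (3) For any $a,b\in R$ with $aR+bR=R$ there exists a projection $p$ such that $a+bp$ is left invertible.
   Context: A $*$-ring is a ring with identity with an involution $*$. A projection is $p$ with $p^2=p=p^*$. ${\rm psr}(R)=1$ means: for any $a,b\in R$ with $aR+bR=R$ there is a projection $p$ such that $a+bp$ is a unit. *)

theory Defs
  imports Main
begin

definition is_involution :: "('a::ring_1 \<Rightarrow> 'a) \<Rightarrow> bool" where
  "is_involution s \<longleftrightarrow>
     (\<forall>x y. s (x + y) = s x + s y) \<and>
     (\<forall>x y. s (x * y) = s y * s x) \<and>
     (\<forall>x. s (s x) = x)"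

definition is_projection :: "('a::ring_1 \<Rightarrow> 'a) \<Rightarrow> 'a \<Rightarrow> bool" where
  "is_projection s p \<longleftrightarrow> p * p = p \<and> s p = p"

definition is_unit :: "'a::ring_1 \<Rightarrow> bool" where
  "is_unit u \<longleftrightarrow> (\<exists>v. u * v = 1 \<and> v * u = 1)"

definition right_invertible :: "'a::ring_1 \<Rightarrow> bool" where
  "right_invertible u \<longleftrightarrow> (\<exists>v. u * v = 1)"

definition left_invertible :: "'a::ring_1 \<Rightarrow> bool" where
  "left_invertible u \<longleftrightarrow> (\<exists>v. v * u = 1)"

definition right_comaximal :: "'a::ring_1 \<Rightarrow> 'a \<Rightarrow> bool" where
  "right_comaximal a b \<longleftrightarrow> {a * x + b * y | x y. True} = UNIV"

definition psr_one :: "('a::ring_1 \<Rightarrow> 'a) \<Rightarrow> bool" where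
  "psr_one s \<longleftrightarrow> (\<forall>a b. right_comaximal a b \<longrightarrow>
      (\<exists>p. is_projection s p \<and> is_unit (a + b * p)))"

end

theory Submission
  imports Defs
begin

lemma comax_intro:
  fixes a b :: "'a::ring_1"
  assumes "a * x + b * y = 1"
  shows "right_comaximal a b"
  unfolding right_comaximal_def
proof (intro set_eqI iffI)
  fix z :: 'a
  have "a * (x * z) + b * (y * z) = z"
    using assms by (metis distrib_right mult.assoc mult_1_left)
  then show "z \<in> {a * x + b * y | x y. True}" by (intro CollectI exI[of _ "x*z"] exI[of _ "y*z"]) simp
qed auto

lemma two_to_one:
  fixes s :: "'a::ring_1 \<Rightarrow> 'a"
  assumes H: "\<forall>a b. right_comaximal a b \<longrightarrow>
              (\<exists>p. is_projection s p \<and> right_invertible (a + b * p))"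
  shows "psr_one s"
  unfolding psr_one_def
proof (intro allI impI)
  fix a b :: 'a
  assume "right_comaximal a b"
  with H obtain p where p: "is_projection s p" and ri: "right_invertible (a + b * p)" by blast
  define u where "u = a + b * p"
  from ri obtain v where uv: "u * v = 1" unfolding right_invertible_def u_def by blast
  have "v * u + (1 - v * u) * 1 = 1" by simp
  then have "right_comaximal v (1 - v * u)" by (rule comax_intro)
  with H obtain q where "right_invertible (v + (1 - v * u) * q)" by blast
  then obtain w where w: "(v + (1 - v * u) * q) * w = 1" unfolding right_invertible_def by blast
  have "u * ((v + (1 - v * u) * q) * w) = u" using w by simp
  moreover have "u * ((v + (1 - v * u) * q) * w) = w"
  proof -
    have "u * (v + (1 - v * u) * q) = 1"
      using uv by (simp add: algebra_simps flip: mult.assoc)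
    then show ?thesis by (metis mult.assoc mult_1_left)
  qed
  ultimately have "w = u" by simp
  with w have L: "(v + (1 - v * u) * q) * u = 1" by simp
  have "(v + (1 - v * u) * q) = (v + (1 - v * u) * q) * (u * v)" using uv by simp
  also have "\<dots> = v" using L by (simp flip: mult.assoc)
  finally have "v * u = 1" using L by simp
  with uv have "is_unit u" unfolding is_unit_def by blast
  with p show "\<exists>p. is_projection s p \<and> is_unit (a + b * p)" unfolding u_def by blast
qed

lemma three_to_one:
  fixes s :: "'a::ring_1 \<Rightarrow> 'a"
  assumes H: "\<forall>a b. right_comaximal a b \<longrightarrow>
              (\<exists>p. is_projection s p \<and> left_invertible (a + b * p))"
  shows "psr_one s"
  unfolding psr_one_def
proof (intro allI impI)
  fix a b :: 'a
  assume "right_comaximal a b"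
  with H obtain p where p: "is_projection s p" and li: "left_invertible (a + b * p)" by blast
  define u where "u = a + b * p"
  from li obtain v where vu: "v * u = 1" unfolding left_invertible_def u_def by blast
  have "v * u + 0 * 0 = 1" using vu by simp
  then have "right_comaximal v 0" by (rule comax_intro)
  with H obtain q where "left_invertible (v + 0 * q)" by blast
  then obtain w where w: "w * v = 1" unfolding left_invertible_def by auto
  have "w = w * (v * u)" using vu by simp
  also have "\<dots> = u" using w by (simp flip: mult.assoc)
  finally have "u * v = 1" using w by simp
  with vu have "is_unit u" unfolding is_unit_def by blast
  with p show "\<exists>p. is_projection s p \<and> is_unit (a + b * p)" unfolding u_def by blast
qed

theorem proposition4p2:
  fixes s :: "'a::ring_1 \<Rightarrow> 'a"
  assumes "is_involution s"
  shows "(psr_one s \<longleftrightarrow>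
           (\<forall>a b. right_comaximal a b \<longrightarrow>
              (\<exists>p. is_projection s p \<and> right_invertible (a + b * p))))
       \<and> (psr_one s \<longleftrightarrow>
           (\<forall>a b. right_comaximal a b \<longrightarrow>
              (\<exists>p. is_projection s p \<and> left_invertible (a + b * p))))"
proof -
  have r: "psr_one s \<Longrightarrow> (\<forall>a b. right_comaximal a b \<longrightarrow>
              (\<exists>p. is_projection s p \<and> right_invertible (a + b * p)))"
    unfolding psr_one_def is_unit_def right_invertible_def by blast
  have l: "psr_one s \<Longrightarrow> (\<forall>a b. right_comaximal a b \<longrightarrow>
              (\<exists>p. is_projection s p \<and> left_invertible (a + b * p)))"
    unfolding psr_one_def is_unit_def left_invertible_def by blast
  show ?thesis using r l two_to_one three_to_one by blast
qed

end
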